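(* Let $\mathcal M=(\mathbf M^{(\lambda)})_{\lambda>0}$ be a weight matrix on $\mathbb N_0^d$ such that for every $\lambda>0$ there exist $0<\kappa\le\lambda$ and $A\ge1$ with $M^{(\kappa)}_{\alpha+e_j}\le A^{|\alpha|+1}M^{(\lambda)}_\alpha$ for all $\alpha\in\mathbb N_0^d$ and $1\le j\le d$. Then the sequence space $\Lambda_{(\mathcal M)}$ is nuclear.
   Context: A weight matrix is a family $\mathcal M=(\mathbf M^{(\lambda)})_{\lambda>0}$ with $\mathbf M^{(\lambda)}=(M^{(\lambda)}_\alpha)_{\alpha\in\mathbb N_0^d}$ sequences of positive reals, $M^{(\lambda)}_0=1$, and $M^{(\lambda)}_\alpha\le M^{(\kappa)}_\alpha$ for all $\alpha$ whenever $0<\lambda\le\kappa$. $e_j$ denotes the $j$-th unit vector, $|\alpha|=\sum\alpha_j$. The associated weight function of $\mathbf M=(M_\alpha)$ is $\omega_{\mathbf M}(t)=\sup_{\alpha\in\mathbb N^d_{0,t}}\log\frac{|t^\alpha|}{M_\alpha}$ ($t\in\mathbb R^d$), where $\mathbb N^d_{0,t}=\{\alpha:\alpha_j=0\text{ whenever }t_j=0\}$ and $0^0:=1$. With $\alpha^{1/2}=(\alpha_1^{1/2},\dots,\alpha_d^{1/2})$ and $\|\mathbf c\|_{\mathbf M,h}:=\sup_\alpha|c_\alpha|e^{\omega_{\mathbf M}(\alpha^{1/2}/h)}$, $\Lambda_{(\mathcal M)}$ is the space of $\mathbf c\in\mathbb C^{\mathbb N_0^d}$ with $\|\mathbf c\|_{\mathbf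 M^{(\lambda)},h}<\infty$ for all $\lambda,h>0$, with the Fréchet topology given by the norms $\|\cdot\|_{\mathbf M^{(1/j)},1/j}$, $j\in\mathbb N$. *)

theory Defs
  imports Complex_Main "HOL-Library.Extended_Real"
begin

text \<open>Multi-indices in N_0^d are functions 'd => nat for a finite index type 'd
  (d = CARD('d)).  A weight matrix is M :: real => ('d => nat) => real,
  where M lam is the sequence M^(lam).\<close>

definition mi_length :: "('d::finite \<Rightarrow> nat) \<Rightarrow> nat" where
  "mi_length \<alpha> = (\<Sum>j\<in>UNIV. \<alpha> j)"

definition weight_matrix :: "(real \<Rightarrow> ('d::finite \<Rightarrow> nat) \<Rightarrow> real) \<Rightarrow> bool" where
  "weight_matrix M \<longleftrightarrow>
     (\<forall>lam>0. (\<forall>\<alpha>. M lam \<alpha> > 0) \<and> M lam (\<lambda>_. 0) = 1) \<and>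
     (\<forall>lam kap \<alpha>. 0 < lam \<longrightarrow> lam \<le> kap \<longrightarrow> M lam \<alpha> \<le> M kap \<alpha>)"

text \<open>Associated weight function omega_M(t) = sup over beta in N^d_{0,t} of
  log(|t^beta| / M_beta), with 0^0 = 1; extended-real valued since the
  supremum may be infinite.\<close>

definition assoc_weight :: "(('d::finite \<Rightarrow> nat) \<Rightarrow> real) \<Rightarrow> ('d \<Rightarrow> real) \<Rightarrow> ereal" where
  "assoc_weight Ms t =
     (SUP \<beta>\<in>{\<beta>. \<forall>j. t j = 0 \<longrightarrow> \<beta> j = 0}.
        ereal (ln ((\<Prod>j\<in>UNIV. \<bar>t j\<bar> ^ \<beta> j) / Ms \<beta>)))"

definition exp_ereal :: "ereal \<Rightarrow> ereal" where
  "exp_ereal x = (case x of ereal r \<Rightarrow> ereal (exp r) | PInfty \<Rightarrow> \<infinity> | MInfty \<Rightarrow> 0)"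

definition seq_norm :: "(('d::finite \<Rightarrow> nat) \<Rightarrow> real) \<Rightarrow> real \<Rightarrow> (('d \<Rightarrow> nat) \<Rightarrow> complex) \<Rightarrow> ereal" where
  "seq_norm Ms h c =
     (SUP \<alpha>. ereal (cmod (c \<alpha>)) *
        exp_ereal (assoc_weight Ms (\<lambda>j. sqrt (real (\<alpha> j)) / h)))"

definition Lambda_space :: "(real \<Rightarrow> ('d::finite \<Rightarrow> nat) \<Rightarrow> real) \<Rightarrow> (('d \<Rightarrow> nat) \<Rightarrow> complex) set" where
  "Lambda_space M = {c. \<forall>lam>0. \<forall>h>0. seq_norm (M lam) h c < \<infinity>}"

text \<open>Fundamental system of norms ||.||_{M^(1/j),1/j}, j = 1,2,... (indexed by n with j = n+1).\<close>

definition Lambda_norm :: "(real \<Rightarrow> ('d::finite \<Rightarrow> nat) \<Rightarrow> real) \<Rightarrow> nat \<Rightarrow> (('d \<Rightarrow> nat) \<Rightarrow> complex) \<Rightarrow> real" where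
  "Lambda_norm M n c = real_of_ereal (seq_norm (M (1 / real (Suc n))) (1 / real (Suc n)) c)"

text \<open>Nuclearity (Grothendieck/Pietsch, e.g. Meise-Vogt Def. 28.1) of a locally convex
  space E of sequences whose topology is given by an increasing fundamental sequence
  of seminorms p: for every n there is m such that the canonical map from the local
  Banach space E_{p m} to the completion of E_{p n} is nuclear.  Nuclearity of this
  canonical map is expressed intrinsically: there are linear functionals f k on E with
  |f k x| <= C k * p m x and vectors z k in E with sum_k C k * p n (z k) < infinity
  and x = sum_k f k x z k in the seminorm p n for every x in E.  (Every element of the
  completion is an absolutely p n-convergent series of elements of E, so this is
  equivalent to the usual formulation with vectors in the completion.)\<close>

definition canonical_map_nuclear ::
  "('i \<Rightarrow> complex) set \<Rightarrow> (('i \<Rightarrow> complex) \<Rightarrow> real) \<Rightarrow> (('i \<Rightarrow> complex) \<Rightarrow> real) \<Rightarrow> bool" where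
  "canonical_map_nuclear E p q \<longleftrightarrow>
     (\<exists>(f :: nat \<Rightarrow> ('i \<Rightarrow> complex) \<Rightarrow> complex) (z :: nat \<Rightarrow> 'i \<Rightarrow> complex) (C :: nat \<Rightarrow> real).
        (\<forall>k. \<forall>x\<in>E. \<forall>y\<in>E. f k (\<lambda>i. x i + y i) = f k x + f k y) \<and>
        (\<forall>k. \<forall>a. \<forall>x\<in>E. f k (\<lambda>i. a * x i) = a * f k x) \<and>
        (\<forall>k. \<forall>x\<in>E. cmod (f k x) \<le> C k * q x) \<and>
        (\<forall>k. z k \<in> E) \<and>
        summable (\<lambda>k. C k * p (z k)) \<and>
        (\<forall>x\<in>E. (\<lambda>N. p (\<lambda>i. x i - (\<Sum>k<N. f k x * z k i))) \<longlonglongrightarrow> 0))"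

definition nuclear_seq_space ::
  "('i \<Rightarrow> complex) set \<Rightarrow> (nat \<Rightarrow> ('i \<Rightarrow> complex) \<Rightarrow> real) \<Rightarrow> bool" where
  "nuclear_seq_space E p \<longleftrightarrow> (\<forall>n. \<exists>m\<ge>n. canonical_map_nuclear E (p n) (p m))"

end

theory Submission
  imports Defs "HOL-Analysis.Analysis"
begin

definition adm :: "('d::finite \<Rightarrow> real) \<Rightarrow> ('d \<Rightarrow> nat) \<Rightarrow> bool" where
  "adm t \<beta> \<longleftrightarrow> (\<forall>j. t j = 0 \<longrightarrow> \<beta> j = 0)"

definition qq :: "(('d::finite \<Rightarrow> nat) \<Rightarrow> real) \<Rightarrow> ('d \<Rightarrow> real) \<Rightarrow> ('d \<Rightarrow> nat) \<Rightarrow> real" where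
  "qq Ms t \<beta> = (\<Prod>j\<in>UNIV. \<bar>t j\<bar> ^ \<beta> j) / Ms \<beta>"

definition WW :: "(('d::finite \<Rightarrow> nat) \<Rightarrow> real) \<Rightarrow> ('d \<Rightarrow> real) \<Rightarrow> ereal" where
  "WW Ms t = exp_ereal (assoc_weight Ms t)"

lemma assoc_weight_alt: "assoc_weight Ms t = (SUP \<beta>\<in>{\<beta>. adm t \<beta>}. ereal (ln (qq Ms t \<beta>)))"
  unfolding assoc_weight_def adm_def qq_def by simp

lemma qq_pos: assumes "adm t \<beta>" "Ms \<beta> > 0" shows "qq Ms t \<beta> > 0"
  using assms unfolding qq_def adm_def
  by (intro divide_pos_pos prod_pos) (auto simp: zero_less_power_eq)

lemma assoc_weight_nonneg:
  assumes "Ms (\<lambda>_. 0) = 1" shows "assoc_weight Ms t \<ge> 0"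
proof -
  have "adm t (\<lambda>_. 0)" by (simp add: adm_def)
  moreover have "ln (qq Ms t (\<lambda>_. 0)) = 0" using assms by (simp add: qq_def)
  ultimately show ?thesis unfolding assoc_weight_alt
    by (metis (mono_tags, lifting) SUP_upper mem_Collect_eq zero_ereal_def)
qed

lemma exp_ereal_mono: "x \<le> y \<Longrightarrow> exp_ereal x \<le> exp_ereal y"
  by (cases x; cases y) (auto simp: exp_ereal_def)

lemma exp_ereal_add: "exp_ereal (x + ereal c) = ereal (exp c) * exp_ereal x"
  by (cases x) (auto simp: exp_ereal_def exp_add)

lemma WW_ge1: assumes "Ms (\<lambda>_. 0) = 1" shows "WW Ms t \<ge> 1"
proof -
  have "exp_ereal 0 \<le> WW Ms t" unfolding WW_def
    by (rule exp_ereal_mono, rule assoc_weight_nonneg, rule assms)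
  thus ?thesis by (simp add: exp_ereal_def zero_ereal_def one_ereal_def)
qed

lemma WW_dom:
  assumes F: "F > 0"
    and pos: "\<And>\<beta>. Ms \<beta> > 0" "\<And>\<beta>. Ms' \<beta> > 0"
    and dom: "\<And>\<beta>. adm s \<beta> \<Longrightarrow> \<exists>\<gamma>. adm t \<gamma> \<and> F * qq Ms s \<beta> \<le> qq Ms' t \<gamma>"
  shows "ereal F * WW Ms s \<le> WW Ms' t"
proof -
  have "assoc_weight Ms s \<le> assoc_weight Ms' t - ereal (ln F)"
    unfolding assoc_weight_alt[of Ms s]
  proof (rule SUP_least)
    fix \<beta> assume "\<beta> \<in> {\<beta>. adm s \<beta>}"
    then have a: "adm s \<beta>" by simp
    obtain \<gamma> where g: "adm t \<gamma>" "F * qq Ms s \<beta> \<le> qq Ms' t \<gamma>" using dom[OF a] by blast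
    have p1: "qq Ms s \<beta> > 0" using qq_pos[OF a pos(1)] .
    have p2: "qq Ms' t \<gamma> > 0" using g(2) F p1 by (smt (verit) mult_pos_pos)
    have e1: "ln F + ln (qq Ms s \<beta>) = ln (F * qq Ms s \<beta>)" using F p1 by (simp add: ln_mult)
    have e2: "ln (F * qq Ms s \<beta>) \<le> ln (qq Ms' t \<gamma>)" using g(2) F p1 p2 by simp
    have "ln (qq Ms s \<beta>) \<le> ln (qq Ms' t \<gamma>) - ln F" using e1 e2 by linarith
    then have "ereal (ln (qq Ms s \<beta>)) \<le> ereal (ln (qq Ms' t \<gamma>)) - ereal (ln F)" by simp
    also have "ereal (ln (qq Ms' t \<gamma>)) \<le> assoc_weight Ms' t"
      unfolding assoc_weight_alt using g(1) by (auto intro: SUP_upper)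
    hence "ereal (ln (qq Ms' t \<gamma>)) - ereal (ln F) \<le> assoc_weight Ms' t - ereal (ln F)"
      by (cases "assoc_weight Ms' t") auto
    finally show "ereal (ln (qq Ms s \<beta>)) \<le> assoc_weight Ms' t - ereal (ln F)" .
  qed
  hence "assoc_weight Ms s + ereal (ln F) \<le> assoc_weight Ms' t"
    by (cases "assoc_weight Ms s"; cases "assoc_weight Ms' t") auto
  hence "exp_ereal (assoc_weight Ms s + ereal (ln F)) \<le> WW Ms' t"
    unfolding WW_def by (rule exp_ereal_mono)
  thus ?thesis using F by (simp add: exp_ereal_add WW_def)
qed

lemma prod_div_pow:
  fixes t :: "'d::finite \<Rightarrow> real"
  shows "(\<Prod>i\<in>UNIV. \<bar>t i / A\<bar> ^ \<beta> i) = (\<Prod>i\<in>UNIV. \<bar>t i\<bar> ^ \<beta> i) / \<bar>A\<bar> ^ mi_length \<beta>"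
  by (simp add: mi_length_def power_sum abs_divide power_divide prod_dividef)

lemma prod_upd:
  fixes t :: "'d::finite \<Rightarrow> real"
  shows "(\<Prod>i\<in>UNIV. \<bar>t i\<bar> ^ (\<beta>(j := \<beta> j + 1)) i) = \<bar>t j\<bar> * (\<Prod>i\<in>UNIV. \<bar>t i\<bar> ^ \<beta> i)"
proof -
  have "(\<Prod>i\<in>UNIV. \<bar>t i\<bar> ^ (\<beta>(j := \<beta> j + 1)) i)
      = (\<Prod>i\<in>UNIV. \<bar>t i\<bar> ^ \<beta> i * (if i = j then \<bar>t j\<bar> else 1))"
    by (intro prod.cong) auto
  also have "\<dots> = (\<Prod>i\<in>UNIV. \<bar>t i\<bar> ^ \<beta> i) * \<bar>t j\<bar>"
    by (simp add: prod.distrib)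
  finally show ?thesis by simp
qed

lemma step:
  fixes Ms Ms' :: "('d::finite \<Rightarrow> nat) \<Rightarrow> real"
  assumes pos: "\<And>\<beta>. Ms \<beta> > 0" "\<And>\<beta>. Ms' \<beta> > 0" and mono: "\<And>\<beta>. Ms' \<beta> \<le> Ms \<beta>"
    and A: "A \<ge> 1"
    and H: "\<And>\<alpha> j. Ms' (\<alpha>(j := \<alpha> j + 1)) \<le> A ^ (mi_length \<alpha> + 1) * Ms \<alpha>"
    and a: "adm t \<beta>"
  shows "\<exists>\<gamma>. adm t \<gamma> \<and> max 1 (\<bar>t j\<bar> / A) * qq Ms (\<lambda>i. t i / A) \<beta> \<le> qq Ms' t \<gamma>"
proof (cases "\<bar>t j\<bar> \<ge> A")
  case True
  define \<gamma> where "\<gamma> = \<beta>(j := \<beta> j + 1)"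
  have tj: "t j \<noteq> 0" using True A by auto
  have ag: "adm t \<gamma>" using a tj unfolding adm_def \<gamma>_def by auto
  define T where "T = (\<Prod>i\<in>UNIV. \<bar>t i\<bar> ^ \<beta> i)"
  have T0: "T \<ge> 0" unfolding T_def by (intro prod_nonneg) auto
  have Apos: "A > 0" using A by simp
  have mx: "max 1 (\<bar>t j\<bar> / A) = \<bar>t j\<bar> / A" using True Apos by (simp add: le_divide_eq)
  have "max 1 (\<bar>t j\<bar> / A) * qq Ms (\<lambda>i. t i / A) \<beta>
        = (\<bar>t j\<bar> * T) / (A ^ (mi_length \<beta> + 1) * Ms \<beta>)"
    unfolding mx qq_def prod_div_pow T_def[symmetric] using Apos by (simp add: field_simps)
  also have "\<dots> \<le> (\<bar>t j\<bar> * T) / Ms' \<gamma>"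
    unfolding \<gamma>_def using H[of \<beta> j] pos T0 Apos by (intro divide_left_mono) (auto intro!: mult_pos_pos zero_less_power)
  also have "\<dots> = qq Ms' t \<gamma>" unfolding qq_def \<gamma>_def prod_upd T_def ..
  finally show ?thesis using ag by blast
next
  case False
  have Apos: "A > 0" using A by simp
  have mx: "max 1 (\<bar>t j\<bar> / A) = 1" using False Apos by (simp add: divide_le_eq)
  have "(\<Prod>i\<in>UNIV. \<bar>t i / A\<bar> ^ \<beta> i) \<le> (\<Prod>i\<in>UNIV. \<bar>t i\<bar> ^ \<beta> i)"
    using A by (intro prod_mono) (auto intro!: power_mono simp: abs_divide divide_le_eq mult_le_cancel_left1)
  hence "qq Ms (\<lambda>i. t i / A) \<beta> \<le> qq Ms t \<beta>"
    unfolding qq_def using pos(1)[of \<beta>] by (intro divide_right_mono) auto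
  also have "\<dots> \<le> qq Ms' t \<beta>" unfolding qq_def using pos mono[of \<beta>]
    by (intro divide_left_mono) (auto intro!: prod_nonneg mult_pos_pos)
  finally show ?thesis using a mx by auto
qed

lemma qq_nonneg: "(\<And>\<beta>. Ms \<beta> > 0) \<Longrightarrow> qq Ms t \<beta> \<ge> 0"
  unfolding qq_def by (intro divide_nonneg_pos prod_nonneg) auto

lemma wm_pos: "weight_matrix M \<Longrightarrow> lam > 0 \<Longrightarrow> M lam \<beta> > 0"
  unfolding weight_matrix_def by blast

lemma wm_one: "weight_matrix M \<Longrightarrow> lam > 0 \<Longrightarrow> M lam (\<lambda>_. 0) = 1"
  unfolding weight_matrix_def by blast

lemma wm_mono: "weight_matrix M \<Longrightarrow> 0 < lam \<Longrightarrow> lam \<le> kap \<Longrightarrow> M lam \<beta> \<le> M kap \<beta>"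
  unfolding weight_matrix_def by blast

lemma chain:
  fixes M :: "real \<Rightarrow> ('d::finite \<Rightarrow> nat) \<Rightarrow> real"
  assumes wm: "weight_matrix M"
    and H: "\<forall>lam>0. \<exists>kap. 0 < kap \<and> kap \<le> lam \<and> (\<exists>A\<ge>1. \<forall>\<alpha> j.
           M kap (\<alpha>(j := \<alpha> j + 1)) \<le> A ^ (mi_length \<alpha> + 1) * M lam \<alpha>)"
  shows "\<forall>lam>0. \<exists>kap. 0 < kap \<and> kap \<le> lam \<and> (\<exists>B\<ge>1. \<forall>t \<beta>. adm t \<beta> \<longrightarrow>
     (\<exists>\<gamma>. adm t \<gamma> \<and> prod_list (map (\<lambda>j. max 1 (\<bar>t j\<bar> / B)) js) * qq (M lam) (\<lambda>i. t i / B) \<beta>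
        \<le> qq (M kap) t \<gamma>))"
proof (induction js)
  case Nil
  show ?case
  proof (intro allI impI)
    fix lam :: real assume "lam > 0"
    then show "\<exists>kap. 0 < kap \<and> kap \<le> lam \<and> (\<exists>B\<ge>1. \<forall>t \<beta>. adm t \<beta> \<longrightarrow>
     (\<exists>\<gamma>. adm t \<gamma> \<and> prod_list (map (\<lambda>j. max 1 (\<bar>t j\<bar> / B)) []) * qq (M lam) (\<lambda>i. t i / B) \<beta>
        \<le> qq (M kap) t \<gamma>))"
      by (intro exI[of _ lam] conjI exI[of _ 1]) auto
  qed
next
  case (Cons j js)
  show ?case
  proof (intro allI impI)
    fix lam :: real assume lam: "lam > 0"
    obtain k1 B1 where k1: "0 < k1" "k1 \<le> lam" "B1 \<ge> 1" and
      IH: "\<And>t \<beta>. adm t \<beta> \<Longrightarrow> (\<exists>\<gamma>. adm t \<gamma> \<and> prod_list (map (\<lambda>j. max 1 (\<bar>t j\<bar> / B1)) js) * qq (M lam) (\<lambda>i. t i / B1) \<beta>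
        \<le> qq (M k1) t \<gamma>)"
      using Cons.IH lam by blast
    obtain k2 A where k2: "0 < k2" "k2 \<le> k1" "A \<ge> 1" and
      HA: "\<And>\<alpha> j. M k2 (\<alpha>(j := \<alpha> j + 1)) \<le> A ^ (mi_length \<alpha> + 1) * M k1 \<alpha>"
      using H k1(1) by blast
    have Apos: "A > 0" using k2 by simp
    have B1pos: "B1 > 0" using k1 by simp
    define B where "B = A * B1"
    have B: "B \<ge> 1" unfolding B_def using k1 k2 by (metis mult_mono' mult_1_right order_trans zero_le_one linear)
    have "\<forall>t \<beta>. adm t \<beta> \<longrightarrow>
     (\<exists>\<gamma>. adm t \<gamma> \<and> prod_list (map (\<lambda>j. max 1 (\<bar>t j\<bar> / B)) (j # js)) * qq (M lam) (\<lambda>i. t i / B) \<beta>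
        \<le> qq (M k2) t \<gamma>)"
    proof (intro allI impI)
      fix t :: "'d \<Rightarrow> real" and \<beta> assume a: "adm t \<beta>"
      define t' where "t' = (\<lambda>i. t i / A)"
      have a': "adm t' \<beta>" using a Apos unfolding adm_def t'_def by auto
      obtain \<gamma>1 where g1: "adm t' \<gamma>1" "prod_list (map (\<lambda>j. max 1 (\<bar>t' j\<bar> / B1)) js) * qq (M lam) (\<lambda>i. t' i / B1) \<beta>
        \<le> qq (M k1) t' \<gamma>1" using IH[OF a'] by blast
      have ag1: "adm t \<gamma>1" using g1(1) Apos unfolding adm_def t'_def by auto
      obtain \<gamma> where g: "adm t \<gamma>" "max 1 (\<bar>t j\<bar> / A) * qq (M k1) t' \<gamma>1 \<le> qq (M k2) t \<gamma>"
        using step[of "M k1" "M k2" A t \<gamma>1 j] wm_pos[OF wm] k1 k2 ag1 HA wm_mono[OF wm, of k2 k1]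
        unfolding t'_def by blast
      have e1: "(\<lambda>i. t' i / B1) = (\<lambda>i. t i / B)" unfolding t'_def B_def by auto
      have e2: "map (\<lambda>j. max 1 (\<bar>t' j\<bar> / B1)) js = map (\<lambda>j. max 1 (\<bar>t j\<bar> / B)) js"
        unfolding t'_def B_def using Apos by (simp add: abs_divide)
      have m: "max 1 (\<bar>t j\<bar> / B) \<le> max 1 (\<bar>t j\<bar> / A)"
      proof -
        have "\<bar>t j\<bar> \<le> B1 * \<bar>t j\<bar>" using k1(3) by (simp add: mult_le_cancel_right1)
        thus ?thesis unfolding B_def using Apos k1 by (intro max.mono) (auto simp: divide_le_eq field_simps)
      qed
      have pn: "0 \<le> prod_list (map (\<lambda>j. max 1 (\<bar>t j\<bar> / B)) js) * qq (M lam) (\<lambda>i. t i / B) \<beta>"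
        using wm_pos[OF wm lam] by (intro mult_nonneg_nonneg qq_nonneg prod_list_nonneg) auto
      have "prod_list (map (\<lambda>j. max 1 (\<bar>t j\<bar> / B)) (j # js)) * qq (M lam) (\<lambda>i. t i / B) \<beta>
          = max 1 (\<bar>t j\<bar> / B) * (prod_list (map (\<lambda>j. max 1 (\<bar>t j\<bar> / B)) js) * qq (M lam) (\<lambda>i. t i / B) \<beta>)"
        by simp
      also have "\<dots> \<le> max 1 (\<bar>t j\<bar> / A) * qq (M k1) t' \<gamma>1"
        using g1(2) m pn unfolding e1 e2 by (intro mult_mono) auto
      also have "\<dots> \<le> qq (M k2) t \<gamma>" by (rule g(2))
      finally show "\<exists>\<gamma>. adm t \<gamma> \<and> prod_list (map (\<lambda>j. max 1 (\<bar>t j\<bar> / B)) (j # js)) * qq (M lam) (\<lambda>i. t i / B) \<beta>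
        \<le> qq (M k2) t \<gamma>" using g(1) by blast
    qed
    then show "\<exists>kap. 0 < kap \<and> kap \<le> lam \<and> (\<exists>B\<ge>1. \<forall>t \<beta>. adm t \<beta> \<longrightarrow>
     (\<exists>\<gamma>. adm t \<gamma> \<and> prod_list (map (\<lambda>j. max 1 (\<bar>t j\<bar> / B)) (j # js)) * qq (M lam) (\<lambda>i. t i / B) \<beta>
        \<le> qq (M kap) t \<gamma>))"
      using k1 k2 B by (intro exI[of _ k2] conjI exI[of _ B]) auto
  qed
qed

definition rr :: "nat \<Rightarrow> real" where "rr n = 1 / real (Suc n)"

definition Wn :: "(real \<Rightarrow> ('d::finite \<Rightarrow> nat) \<Rightarrow> real) \<Rightarrow> nat \<Rightarrow> ('d \<Rightarrow> nat) \<Rightarrow> ereal" where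
  "Wn M n \<alpha> = WW (M (rr n)) (\<lambda>j. sqrt (real (\<alpha> j)) / rr n)"

definition FF :: "('d::finite \<Rightarrow> nat) \<Rightarrow> real" where
  "FF \<alpha> = (\<Prod>j\<in>UNIV. ((1 + real (\<alpha> j)) / 2) ^ 2)"

lemma rr_pos: "rr n > 0" and rr_le1: "rr n \<le> 1"
  by (auto simp: rr_def)

lemma FF_pos: "FF \<alpha> > 0"
  unfolding FF_def by (intro prod_pos) (auto simp: add_pos_nonneg)

lemma FF_aux: "((1 + real a) / 2) ^ 2 \<le> (max 1 (sqrt (real a))) ^ 4"
proof (cases "a = 0")
  case False
  then have a1: "real a \<ge> 1" by simp
  then have "max 1 (sqrt (real a)) = sqrt (real a)" by simp
  moreover have "sqrt (real a) ^ 4 = real a ^ 2"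
    by (metis (no_types, lifting) numeral_Bit0 power_add power2_eq_square real_sqrt_pow2 of_nat_0_le_iff)
  moreover have "((1 + real a) / 2) ^ 2 \<le> real a ^ 2" using a1 by (intro power_mono) auto
  ultimately show ?thesis by simp
qed (auto simp: power2_eq_square)

lemma key:
  fixes M :: "real \<Rightarrow> ('d::finite \<Rightarrow> nat) \<Rightarrow> real"
  assumes wm: "weight_matrix M"
    and H: "\<forall>lam>0. \<exists>kap. 0 < kap \<and> kap \<le> lam \<and> (\<exists>A\<ge>1. \<forall>\<alpha> j.
           M kap (\<alpha>(j := \<alpha> j + 1)) \<le> A ^ (mi_length \<alpha> + 1) * M lam \<alpha>)"
  shows "\<exists>m\<ge>n. \<forall>\<alpha>. ereal (FF \<alpha>) * Wn M n \<alpha> \<le> Wn M m \<alpha>"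
proof -
  obtain xs :: "'d list" where xs: "set xs = UNIV" "distinct xs"
    using finite_distinct_list[of "UNIV :: 'd set"] by auto
  define js where "js = xs @ xs @ xs @ xs"
  obtain kap B where kap: "0 < kap" "kap \<le> rr n" "B \<ge> 1" and
    C: "\<And>t \<beta>. adm t \<beta> \<Longrightarrow> (\<exists>\<gamma>. adm t \<gamma> \<and> prod_list (map (\<lambda>j. max 1 (\<bar>t j\<bar> / B)) js) * qq (M (rr n)) (\<lambda>i. t i / B) \<beta>
        \<le> qq (M kap) t \<gamma>)"
    using chain[OF wm H, of js] rr_pos[of n] by blast
  define eps where "eps = min kap (rr n / B^2)"
  have eps: "eps > 0" unfolding eps_def using kap rr_pos[of n] by auto
  obtain m0 :: nat where m0: "1 / eps < real m0" using reals_Archimedean2 by blast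
  define m where "m = max n m0"
  have "1 / eps < real (Suc m)" using m0 unfolding m_def by linarith
  hence "1 < eps * real (Suc m)" using eps by (simp add: divide_less_eq mult.commute)
  hence rm: "rr m \<le> eps" unfolding rr_def using eps by (simp add: divide_le_eq mult.commute)
  have rmk: "rr m \<le> kap" using rm unfolding eps_def by simp
  have Bpos: "B > 0" using kap by simp
  have rmB: "rr m * B \<le> rr n / B"
  proof -
    have "rr m * B \<le> rr n / B^2 * B" using rm Bpos unfolding eps_def by (intro mult_right_mono) auto
    thus ?thesis using Bpos by (simp add: power2_eq_square)
  qed
  have rnB: "rr n / B \<le> rr n" using kap rr_pos[of n] by (simp add: divide_le_eq mult_le_cancel_left1)
  have rmB1: "rr m * B \<le> 1" using rmB rnB rr_le1[of n] by linarith
  have rmBpos: "rr m * B > 0" using rr_pos[of m] Bpos by simp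
  have "\<forall>\<alpha>. ereal (FF \<alpha>) * Wn M n \<alpha> \<le> Wn M m \<alpha>"
  proof
    fix \<alpha> :: "'d \<Rightarrow> nat"
    define s where "s = (\<lambda>j. sqrt (real (\<alpha> j)) / rr n)"
    define t where "t = (\<lambda>j. sqrt (real (\<alpha> j)) / rr m)"
    have "ereal (FF \<alpha>) * WW (M (rr n)) s \<le> WW (M (rr m)) t"
    proof (rule WW_dom[OF FF_pos])
      show "\<And>\<beta>. M (rr n) \<beta> > 0" "\<And>\<beta>. M (rr m) \<beta> > 0" using wm_pos[OF wm] rr_pos by auto
      fix \<beta> assume as: "adm s \<beta>"
      have at: "adm t \<beta>" using as rr_pos[of n] rr_pos[of m] unfolding adm_def s_def t_def by auto
      obtain \<gamma> where g: "adm t \<gamma>" "prod_list (map (\<lambda>j. max 1 (\<bar>t j\<bar> / B)) js) * qq (M (rr n)) (\<lambda>i. t i / B) \<beta>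
        \<le> qq (M kap) t \<gamma>" using C[OF at] by blast
      have q1: "qq (M kap) t \<gamma> \<le> qq (M (rr m)) t \<gamma>" unfolding qq_def
        using wm_pos[OF wm, of "rr m"] wm_pos[OF wm kap(1)] wm_mono[OF wm rr_pos rmk, of \<gamma>] rr_pos
        by (intro divide_left_mono) (auto intro!: prod_nonneg mult_pos_pos)
      have pl: "prod_list (map (\<lambda>j. max 1 (\<bar>t j\<bar> / B)) js) = (\<Prod>j\<in>UNIV. (max 1 (\<bar>t j\<bar> / B)) ^ 4)"
      proof -
        have "prod_list (map (\<lambda>j. max 1 (\<bar>t j\<bar> / B)) xs) = (\<Prod>j\<in>UNIV. max 1 (\<bar>t j\<bar> / B))"
          using xs by (metis prod.distinct_set_conv_list)
        hence "prod_list (map (\<lambda>j. max 1 (\<bar>t j\<bar> / B)) js) = (\<Prod>j\<in>UNIV. max 1 (\<bar>t j\<bar> / B)) ^ 4"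
          unfolding js_def by (simp add: power4_eq_xxxx mult.assoc)
        thus ?thesis by (simp add: prod_power_distrib)
      qed
      have FP: "FF \<alpha> \<le> prod_list (map (\<lambda>j. max 1 (\<bar>t j\<bar> / B)) js)"
        unfolding pl FF_def
      proof (intro prod_mono conjI)
        fix j
        show "0 \<le> ((1 + real (\<alpha> j)) / 2)\<^sup>2" by simp
        have h1: "sqrt (real (\<alpha> j)) * (rr m * B) \<le> sqrt (real (\<alpha> j))" using rmB1 by (intro mult_left_le) auto
        have "sqrt (real (\<alpha> j)) \<le> \<bar>t j\<bar> / B"
          unfolding t_def using h1 rmBpos rmB1 rr_pos[of m] Bpos
          by (simp add: divide_divide_eq_left le_divide_eq mult_le_cancel_left1)
        hence "max 1 (sqrt (real (\<alpha> j))) ^ 4 \<le> max 1 (\<bar>t j\<bar> / B) ^ 4"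
          by (intro power_mono) auto
        thus "((1 + real (\<alpha> j)) / 2)\<^sup>2 \<le> max 1 (\<bar>t j\<bar> / B) ^ 4" using FF_aux[of "\<alpha> j"] by linarith
      qed
      have qs: "qq (M (rr n)) s \<beta> \<le> qq (M (rr n)) (\<lambda>i. t i / B) \<beta>" unfolding qq_def
      proof (intro divide_right_mono prod_mono conjI power_mono)
        fix j
        have "sqrt (real (\<alpha> j)) / rr n \<le> sqrt (real (\<alpha> j)) / (rr m * B)"
          using rmB rnB rmBpos by (intro divide_left_mono) auto
        thus "\<bar>s j\<bar> \<le> \<bar>t j / B\<bar>" unfolding s_def t_def using rr_pos[of n] rr_pos[of m] Bpos by (simp add: divide_divide_eq_left)
      qed (use wm_pos[OF wm rr_pos[of n]] in \<open>auto intro: less_imp_le\<close>)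
      have "FF \<alpha> * qq (M (rr n)) s \<beta> \<le> prod_list (map (\<lambda>j. max 1 (\<bar>t j\<bar> / B)) js) * qq (M (rr n)) (\<lambda>i. t i / B) \<beta>"
        using FP qs FF_pos[of \<alpha>] qq_nonneg[of "M (rr n)"] wm_pos[OF wm rr_pos]
        by (intro mult_mono) auto
      also have "\<dots> \<le> qq (M (rr m)) t \<gamma>" using g(2) q1 by linarith
      finally show "\<exists>\<gamma>. adm t \<gamma> \<and> FF \<alpha> * qq (M (rr n)) s \<beta> \<le> qq (M (rr m)) t \<gamma>" using g(1) by blast
    qed
    thus "ereal (FF \<alpha>) * Wn M n \<alpha> \<le> Wn M m \<alpha>" unfolding Wn_def s_def t_def .
  qed
  moreover have "m \<ge> n" unfolding m_def by simp
  ultimately show ?thesis by blast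
qed

definition VV :: "(('d::finite \<Rightarrow> nat) \<Rightarrow> real) \<Rightarrow> real \<Rightarrow> ('d \<Rightarrow> nat) \<Rightarrow> ereal" where
  "VV Ms h \<alpha> = exp_ereal (assoc_weight Ms (\<lambda>j. sqrt (real (\<alpha> j)) / h))"

lemma seq_norm_alt: "seq_norm Ms h c = (SUP \<alpha>. ereal (cmod (c \<alpha>)) * VV Ms h \<alpha>)"
  unfolding seq_norm_def VV_def ..

lemma exp_ereal_nonneg: "exp_ereal x \<ge> 0"
  by (cases x) (auto simp: exp_ereal_def)

lemma VV_nonneg: "VV Ms h \<alpha> \<ge> 0"
  unfolding VV_def by (rule exp_ereal_nonneg)

lemma term_le: "ereal (cmod (c \<alpha>)) * VV Ms h \<alpha> \<le> seq_norm Ms h c"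
  unfolding seq_norm_alt by (rule SUP_upper) simp

lemma seq_norm_nonneg: "seq_norm Ms h c \<ge> 0"
  using term_le[of c undefined Ms h] VV_nonneg[of Ms h undefined]
  by (meson ereal_0_le_mult norm_ge_zero ereal_less_eq(5) order_trans)

lemma seq_norm_unit: "seq_norm Ms h (\<lambda>\<beta>. if \<beta> = \<alpha> then 1 else 0) = VV Ms h \<alpha>"
proof (rule antisym)
  show "seq_norm Ms h (\<lambda>\<beta>. if \<beta> = \<alpha> then 1 else 0) \<le> VV Ms h \<alpha>"
    unfolding seq_norm_alt by (rule SUP_least) (auto simp: zero_ereal_def[symmetric] VV_nonneg)
  show "VV Ms h \<alpha> \<le> seq_norm Ms h (\<lambda>\<beta>. if \<beta> = \<alpha> then 1 else 0)"
    using term_le[of "\<lambda>\<beta>. if \<beta> = \<alpha> then (1::complex) else 0" \<alpha> Ms h] by simp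
qed

lemma seq_norm_zero: "seq_norm Ms h (\<lambda>_. 0) = 0"
  unfolding seq_norm_alt by (simp add: zero_ereal_def[symmetric])

lemma zero_of_inf:
  assumes "x \<in> Lambda_space M" "lam > 0" "h > 0" "VV (M lam) h \<alpha> = \<infinity>"
  shows "x \<alpha> = 0"
proof (rule ccontr)
  assume "x \<alpha> \<noteq> 0"
  then have "ereal (cmod (x \<alpha>)) * VV (M lam) h \<alpha> = \<infinity>" using assms(4) by simp
  moreover have "seq_norm (M lam) h x < \<infinity>" using assms unfolding Lambda_space_def by blast
  ultimately show False using term_le[of x \<alpha> "M lam" h] by simp
qed

lemma Wn_VV: "Wn M n \<alpha> = VV (M (rr n)) (rr n) \<alpha>"
  unfolding Wn_def WW_def VV_def ..

lemma Lambda_norm_alt: "Lambda_norm M n c = real_of_ereal (seq_norm (M (rr n)) (rr n) c)"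
  unfolding Lambda_norm_def rr_def ..

lemma Lambda_norm_ereal:
  assumes "x \<in> Lambda_space M"
  shows "ereal (Lambda_norm M n x) = seq_norm (M (rr n)) (rr n) x"
proof -
  have "seq_norm (M (rr n)) (rr n) x < \<infinity>" using assms rr_pos unfolding Lambda_space_def by blast
  moreover have "seq_norm (M (rr n)) (rr n) x \<ge> 0" by (rule seq_norm_nonneg)
  ultimately show ?thesis unfolding Lambda_norm_alt
    by (cases "seq_norm (M (rr n)) (rr n) x") auto
qed

lemma Lambda_norm_nonneg: "Lambda_norm M n x \<ge> 0"
  unfolding Lambda_norm_alt by (rule real_of_ereal_pos[OF seq_norm_nonneg])

lemma summable_a: "Infinite_Set_Sum.abs_summable_on (\<lambda>k::nat. 4 / (1 + real k) ^ 2) UNIV"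
proof -
  have "summable (\<lambda>k::nat. inverse (real k ^ 2))" by (rule inverse_power_summable) simp
  hence "summable (\<lambda>k::nat. inverse (real (Suc k) ^ 2))" by (subst summable_Suc_iff)
  hence "summable (\<lambda>k::nat. 4 * inverse (real (Suc k) ^ 2))" by (rule summable_mult)
  hence "summable (\<lambda>k::nat. norm (4 / (1 + real k) ^ 2))"
    by (rule summable_cong[THEN iffD1, rotated]) (auto simp: field_simps)
  thus ?thesis by (subst Infinite_Set_Sum.abs_summable_on_nat_iff')
qed

lemma aux4: assumes "0 \<le> x" shows "((1 + x) / 2) ^ 2 * (4 / (1 + x) ^ 2) = (1::real)"
proof -
  have y: "(1 + x) ^ 2 > 0" using assms by simp
  have "((1 + x) / 2) ^ 2 = (1 + x) ^ 2 / 4" by (simp add: power_divide)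
  moreover have "\<forall>y::real. y > 0 \<longrightarrow> y / 4 * (4 / y) = 1" by (auto simp: field_simps)
  ultimately show ?thesis using y by simp
qed

lemma G_prod: "1 / FF \<alpha> = (\<Prod>j\<in>UNIV. 4 / (1 + real (\<alpha> j)) ^ 2)"
proof -
  have "FF \<alpha> * (\<Prod>j\<in>UNIV. 4 / (1 + real (\<alpha> j)) ^ 2) = (\<Prod>j\<in>UNIV. ((1 + real (\<alpha> j)) / 2) ^ 2 * (4 / (1 + real (\<alpha> j)) ^ 2))"
    unfolding FF_def by (rule prod.distrib[symmetric])
  also have "\<dots> = 1" by (intro prod.neutral ballI aux4) simp
  finally show ?thesis using FF_pos[of \<alpha>] by (simp add: field_simps)
qed

lemma summable_G:
  assumes "bij_betw (e :: nat \<Rightarrow> ('d::finite \<Rightarrow> nat)) UNIV UNIV"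
  shows "summable (\<lambda>k. 1 / FF (e k))"
proof -
  have "Infinite_Set_Sum.abs_summable_on (\<lambda>g::'d \<Rightarrow> nat. \<Prod>j\<in>UNIV. 4 / (1 + real (g j)) ^ 2) (PiE UNIV (\<lambda>_. UNIV))"
    by (rule Infinite_Set_Sum.abs_summable_on_prod_PiE) (auto intro: summable_a)
  hence "Infinite_Set_Sum.abs_summable_on (\<lambda>g::'d \<Rightarrow> nat. 1 / FF g) UNIV" by (simp add: G_prod)
  hence "Infinite_Set_Sum.abs_summable_on (\<lambda>k. 1 / FF (e k)) UNIV" using Infinite_Set_Sum.abs_summable_on_reindex_bij_betw[OF assms, of "\<lambda>g. 1 / FF g"] by blast
  hence "summable (\<lambda>k. norm (1 / FF (e k)))" by (subst (asm) Infinite_Set_Sum.abs_summable_on_nat_iff')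
  thus ?thesis by (simp add: FF_pos abs_of_pos)
qed

theorem theorem5p3:
  fixes M :: "real \<Rightarrow> ('d::finite \<Rightarrow> nat) \<Rightarrow> real"
  assumes "weight_matrix M"
    and "\<forall>lam>0. \<exists>kap. 0 < kap \<and> kap \<le> lam \<and> (\<exists>A\<ge>1. \<forall>\<alpha> j.
           M kap (\<alpha>(j := \<alpha> j + 1)) \<le> A ^ (mi_length \<alpha> + 1) * M lam \<alpha>)"
  shows "nuclear_seq_space (Lambda_space M) (Lambda_norm M)"
proof -
  note wm = assms(1)
  let ?E = "Lambda_space M"
  have "\<exists>m\<ge>n. canonical_map_nuclear ?E (Lambda_norm M n) (Lambda_norm M m)" for n
  proof -
    obtain m where mn: "m \<ge> n" and K: "\<And>\<alpha>. ereal (FF \<alpha>) * Wn M n \<alpha> \<le> Wn M m \<alpha>"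
      using key[OF assms, of n] by blast
    define e where "e = from_nat_into (UNIV :: ('d \<Rightarrow> nat) set)"
    have inf: "infinite (UNIV :: ('d \<Rightarrow> nat) set)"
    proof -
      have "inj (\<lambda>k::nat. (\<lambda>_::'d. k))" by (rule injI) (metis)
      then show ?thesis using range_inj_infinite infinite_super subset_UNIV by metis
    qed
    have bij: "bij_betw e UNIV UNIV" unfolding e_def
      by (rule bij_betw_from_nat_into) (auto simp: inf)
    have einv: "e (inv e i) = i" for i using bij by (meson bij_betw_inv_into_right iso_tuple_UNIV_I)
    have inve: "inv e (e k) = k" for k using bij by (simp add: bij_betw_imp_inj_on)
    define wn where "wn \<alpha> = real_of_ereal (Wn M n \<alpha>)" for \<alpha> :: "'d \<Rightarrow> nat"
    define wm' where "wm' \<alpha> = real_of_ereal (Wn M m \<alpha>)" for \<alpha> :: "'d \<Rightarrow> nat"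
    define un where "un \<alpha> = (\<lambda>\<beta>. if \<beta> = \<alpha> then (1::complex) else 0)" for \<alpha> :: "'d \<Rightarrow> nat"
    define f where "f k x = x (e k)" for k and x :: "('d \<Rightarrow> nat) \<Rightarrow> complex"
    define z where "z k = (if un (e k) \<in> ?E then un (e k) else (\<lambda>_. 0))" for k
    define C where "C k = 1 / wm' (e k)" for k
    have W1: "Wn M k \<alpha> \<ge> 1" for k \<alpha>
      unfolding Wn_def by (rule WW_ge1, rule wm_one[OF wm rr_pos])
    have fin: "Wn M n \<alpha> = ereal (wn \<alpha>) \<and> Wn M m \<alpha> = ereal (wm' \<alpha>) \<and> 1 \<le> wn \<alpha> \<and> 1 \<le> wm' \<alpha>
        \<and> FF \<alpha> * wn \<alpha> \<le> wm' \<alpha>" if a: "Wn M m \<alpha> \<noteq> \<infinity>" for \<alpha>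
    proof -
      have 1: "Wn M m \<alpha> = ereal (wm' \<alpha>)" "1 \<le> wm' \<alpha>"
        using a W1[of m \<alpha>] unfolding wm'_def by (cases "Wn M m \<alpha>"; auto)+
      have "Wn M n \<alpha> \<noteq> \<infinity>"
      proof
        assume "Wn M n \<alpha> = \<infinity>"
        then have "ereal (FF \<alpha>) * Wn M n \<alpha> = \<infinity>" using FF_pos[of \<alpha>] by simp
        with K[of \<alpha>] a show False by simp
      qed
      then have 2: "Wn M n \<alpha> = ereal (wn \<alpha>)" "1 \<le> wn \<alpha>"
        using W1[of n \<alpha>] unfolding wn_def by (cases "Wn M n \<alpha>"; auto)+
      have "ereal (FF \<alpha> * wn \<alpha>) \<le> ereal (wm' \<alpha>)" using K[of \<alpha>] 1 2 by simp
      then show ?thesis using 1 2 by simp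
    qed
    have wm0: "wm' \<alpha> \<ge> 0" for \<alpha>
      unfolding wm'_def by (rule real_of_ereal_pos, rule order_trans[OF _ W1[of m \<alpha>]]) simp
    have inf0: "x \<alpha> = 0" if "Wn M k \<alpha> = \<infinity>" "x \<in> ?E" for k \<alpha> x
      using zero_of_inf[of x M "rr k" "rr k" \<alpha>] rr_pos[of k] that unfolding Wn_VV by auto
    have unE: "x \<alpha> = 0" if "un \<alpha> \<notin> ?E" "x \<in> ?E" for \<alpha> x
    proof -
      have "\<not> (\<forall>lam>0. \<forall>h>0. seq_norm (M lam) h (un \<alpha>) < \<infinity>)"
        using that(1) unfolding Lambda_space_def by simp
      then obtain lam h where lh: "lam > 0" "h > 0" "\<not> seq_norm (M lam) h (un \<alpha>) < \<infinity>"
        by blast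
      then have "\<not> VV (M lam) h \<alpha> < \<infinity>" unfolding un_def seq_norm_unit by simp
      then have "VV (M lam) h \<alpha> = \<infinity>" by (cases "VV (M lam) h \<alpha>") auto
      then show "x \<alpha> = 0" using zero_of_inf that(2) lh by blast
    qed
    have bound: "cmod (x \<alpha>) \<le> (1 / wm' \<alpha>) * Lambda_norm M m x" if x: "x \<in> ?E" for x \<alpha>
    proof (cases "Wn M m \<alpha> = \<infinity>")
      case True
      then have "x \<alpha> = 0" using inf0 x by blast
      then show ?thesis using wm0[of \<alpha>] Lambda_norm_nonneg[of M m x] by simp
    next
      case False
      have "ereal (cmod (x \<alpha>)) * Wn M m \<alpha> \<le> ereal (Lambda_norm M m x)"
        using term_le[of x \<alpha> "M (rr m)" "rr m"] Lambda_norm_ereal[OF x, of m] unfolding Wn_VV by simp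
      then have "cmod (x \<alpha>) * wm' \<alpha> \<le> Lambda_norm M m x" using fin[OF False] by simp
      then show ?thesis using fin[OF False] by (simp add: field_simps)
    qed
    have pn_z: "Lambda_norm M n (z k) = (if un (e k) \<in> ?E then wn (e k) else 0)" for k
      unfolding z_def Lambda_norm_alt wn_def Wn_VV
      by (simp add: un_def seq_norm_unit seq_norm_zero)
    have term_b: "0 \<le> C k * Lambda_norm M n (z k) \<and> C k * Lambda_norm M n (z k) \<le> 1 / FF (e k)" for k
    proof (cases "Wn M m (e k) = \<infinity>")
      case True
      then have "C k = 0" unfolding C_def wm'_def by simp
      then show ?thesis using FF_pos[of "e k"] by simp
    next
      case False
      note F = fin[OF False]
      have "wn (e k) / wm' (e k) \<le> 1 / FF (e k)"
        using F FF_pos[of "e k"] by (simp add: field_simps)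
      then show ?thesis unfolding pn_z C_def using F FF_pos[of "e k"] by (auto intro: less_imp_le)
    qed
    have summ: "summable (\<lambda>k. C k * Lambda_norm M n (z k))"
      by (rule summable_comparison_test'[OF summable_G[OF bij], of 0]) (use term_b in auto)
    have conv: "(\<lambda>N. Lambda_norm M n (\<lambda>i. x i - (\<Sum>k<N. f k x * z k i))) \<longlonglongrightarrow> 0"
      if x: "x \<in> ?E" for x
    proof -
      define P where "P = Lambda_norm M m x"
      have P0: "P \<ge> 0" unfolding P_def by (rule Lambda_norm_nonneg)
      have pw: "ereal (cmod (x \<alpha>)) * Wn M n \<alpha> \<le> ereal (P * (1 / FF \<alpha>))" for \<alpha>
      proof (cases "Wn M m \<alpha> = \<infinity>")
        case True
        then have "x \<alpha> = 0" using inf0 x by blast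
        then show ?thesis using P0 FF_pos[of \<alpha>] by (simp add: zero_ereal_def[symmetric])
      next
        case False
        note F = fin[OF False]
        have b: "cmod (x \<alpha>) \<le> P / wm' \<alpha>" using bound[OF x, of \<alpha>] unfolding P_def by simp
        have c: "wn \<alpha> \<le> wm' \<alpha> / FF \<alpha>" using F FF_pos[of \<alpha>] by (simp add: field_simps)
        have "cmod (x \<alpha>) * wn \<alpha> \<le> (P / wm' \<alpha>) * (wm' \<alpha> / FF \<alpha>)"
          using b c F P0 by (intro mult_mono) auto
        also have "\<dots> = P * (1 / FF \<alpha>)" using F by (simp add: field_simps)
        finally show ?thesis using F by simp
      qed
      have lim: "(\<lambda>k. P * (1 / FF (e k))) \<longlonglongrightarrow> 0"
        using tendsto_mult[OF tendsto_const[of P] summable_LIMSEQ_zero[OF summable_G[OF bij]]] by simp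
      have res: "(\<lambda>i. x i - (\<Sum>k<N. f k x * z k i)) = (\<lambda>i. if i \<in> e ` {..<N} then 0 else x i)" for N
      proof (rule ext)
        fix i
        have "(\<Sum>k<N. f k x * z k i) = (\<Sum>k<N. if k = inv e i then x i else 0)"
        proof (rule sum.cong[OF refl])
          fix k assume "k \<in> {..<N}"
          show "f k x * z k i = (if k = inv e i then x i else 0)"
          proof (cases "k = inv e i")
            case True
            then have ek: "e k = i" using einv by simp
            show ?thesis using ek True unE[of i x] x unfolding f_def z_def un_def by auto
          next
            case False
            then have "e k \<noteq> i" using inve by auto
            then show ?thesis using False unfolding f_def z_def un_def by auto
          qed
        qed
        also have "\<dots> = (if inv e i \<in> {..<N} then x i else 0)" by simp
        also have "(inv e i \<in> {..<N}) = (i \<in> e ` {..<N})"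
          using einv inve by (metis imageE image_eqI)
        finally show "x i - (\<Sum>k<N. f k x * z k i) = (if i \<in> e ` {..<N} then 0 else x i)" by simp
      qed
      show ?thesis
      proof (rule LIMSEQ_I)
        fix r :: real assume r: "r > 0"
        obtain K where K: "\<And>k. k \<ge> K \<Longrightarrow> norm (P * (1 / FF (e k)) - 0) < r / 2"
          using LIMSEQ_D[OF lim, of "r / 2"] r by auto
        show "\<exists>no. \<forall>N\<ge>no. norm (Lambda_norm M n (\<lambda>i. x i - (\<Sum>k<N. f k x * z k i)) - 0) < r"
        proof (intro exI allI impI)
          fix N assume N: "K \<le> N"
          have "seq_norm (M (rr n)) (rr n) (\<lambda>i. if i \<in> e ` {..<N} then 0 else x i) \<le> ereal (r / 2)"
            unfolding seq_norm_alt
          proof (rule SUP_least)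
            fix i :: "'d \<Rightarrow> nat"
            show "ereal (cmod (if i \<in> e ` {..<N} then 0 else x i)) * VV (M (rr n)) (rr n) i \<le> ereal (r / 2)"
            proof (cases "i \<in> e ` {..<N}")
              case True
              then show ?thesis using r by (simp add: zero_ereal_def[symmetric])
            next
              case False
              then have "inv e i \<ge> N" using einv by (metis image_eqI lessThan_iff not_le)
              then have "P * (1 / FF (e (inv e i))) < r / 2" using K N by (metis order_trans diff_zero real_norm_def abs_less_iff)
              then have "P * (1 / FF i) < r / 2" using einv by simp
              then show ?thesis using pw[of i] False unfolding Wn_VV by (simp add: order_trans[OF _ less_imp_le])
            qed
          qed
          then have "Lambda_norm M n (\<lambda>i. if i \<in> e ` {..<N} then 0 else x i) \<le> r / 2"
            unfolding Lambda_norm_alt using r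
            by (cases "seq_norm (M (rr n)) (rr n) (\<lambda>i. if i \<in> e ` {..<N} then 0 else x i)") auto
          moreover have "Lambda_norm M n (\<lambda>i. if i \<in> e ` {..<N} then 0 else x i) \<ge> 0"
            by (rule Lambda_norm_nonneg)
          ultimately show "norm (Lambda_norm M n (\<lambda>i. x i - (\<Sum>k<N. f k x * z k i)) - 0) < r"
            unfolding res using r by simp
        qed
      qed
    qed
    have zE: "z k \<in> ?E" for k
      unfolding z_def Lambda_space_def by (auto simp: seq_norm_zero)
    show ?thesis unfolding canonical_map_nuclear_def
    proof (intro exI[of _ m] conjI mn exI[of _ f] exI[of _ z] exI[of _ C] allI ballI)
      show "f k (\<lambda>i. x i + y i) = f k x + f k y" for k x y unfolding f_def by simp
      show "f k (\<lambda>i. a * x i) = a * f k x" for k a x unfolding f_def by simp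
      show "cmod (f k x) \<le> C k * Lambda_norm M m x" if "x \<in> ?E" for k x
        unfolding f_def C_def using bound[OF that] .
      show "z k \<in> ?E" for k by (rule zE)
      show "summable (\<lambda>k. C k * Lambda_norm M n (z k))" by (rule summ)
      show "(\<lambda>N. Lambda_norm M n (\<lambda>i. x i - (\<Sum>k<N. f k x * z k i))) \<longlonglongrightarrow> 0" if "x \<in> ?E" for x
        by (rule conv[OF that])
    qed
  qed
  then show ?thesis unfolding nuclear_seq_space_def by blast
qed

end
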